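(* Let $G=(V,E)$ be a graph, let $\overline{E}$ be the set of all unordered pairs of independent edges of $G$, let $k=|\overline{E}|$, and fix an ordering $\sigma(0),\dots,\sigma(k-1)$ of $\overline{E}$. Let $0\le i_\nu\le k$ and let $y_\nu\in\{0,1\}^{i_\nu}$ be a partial candidate solution. Suppose there is an array $y_\mu\in\{0,1\}^{k}$ that extends $y_\nu$ (i.e., $y_\mu[j]=y_\nu[j]$ for all $j<i_\nu$; possibly $y_\mu=y_\nu$ when $i_\nu=k$) and that is a TRUE solution of $G$. Then the graph $G_\nu^*$ is planar.
   Context: An edge $e$ is crossed in $y_\nu$ if $e\in\sigma(j)$ for some $j<i_\nu$ with $y_\nu[j]=1$. An edge $e$ is saturated in $y_\nu$ if at least one of the following holds: (a) $e$ is crossed in $y_\nu$; (b) every index $j$ such that $e\in\sigma(j)$ satisfies $j<i_\nu$; (c) for every pair $\{e,f\}\in\overline{E}$ containing $e$, the other edge $f$ is crossed in $y_\nu$. $G_\nu$ is the subgraph of $G$ formed by the saturated edges (with their end-vertices). $G_\nu^*$ is obtained from $G_\nu$ by, for each $j<i_\nu$ with $y_\nu[j]=1$ and $\sigma(j)=\{(u_1,v_1),(u_2,v_2)\}$, removing these two edges and adding a new dummy vertex adjacent to $u_1,v_1,u_2,v_2$ (this is well defined when every edge lies in at most one such pair, which is the case under the hypothesis of the claim). A binary array $y$ of length $k$ is a TRUE solution of $G$ if (1) every edge of $G$ belongs to at most one pair $\sigma(i)$ with $y[i]=1$, and (2) the graph obtained from $G$ by replacing, for each $i$ with $y[i]=1$,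 the two edges of $\sigma(i)$ by a new dummy vertex adjacent to their four end-vertices, is planar. *)

theory Defs
  imports "HOL-Analysis.Analysis"
begin

definition simple_graph :: "'v set \<Rightarrow> 'v set set \<Rightarrow> bool" where
  "simple_graph V E \<longleftrightarrow> finite V \<and>
     (\<forall>e\<in>E. \<exists>u v. e = {u, v} \<and> u \<noteq> v \<and> u \<in> V \<and> v \<in> V)"

definition planar :: "'a set \<Rightarrow> 'a set set \<Rightarrow> bool" where
  "planar V E \<longleftrightarrow>
     (\<exists>(pos :: 'a \<Rightarrow> complex) (c :: 'a set \<Rightarrow> real \<Rightarrow> complex).
        inj_on pos V \<and>
        (\<forall>e\<in>E. arc (c e) \<and>
           (\<exists>u v. e = {u, v} \<and> u \<noteq> v \<and> pathstart (c e) = pos u \<and> pathfinish (c e) = pos v) \<and>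
           path_image (c e) \<inter> pos ` V \<subseteq> pos ` e) \<and>
        (\<forall>e\<in>E. \<forall>f\<in>E. e \<noteq> f \<longrightarrow> path_image (c e) \<inter> path_image (c f) \<subseteq> pos ` (e \<inter> f)))"

definition indep_pairs :: "'v set set \<Rightarrow> 'v set set set" where
  "indep_pairs E = {{e, f} | e f. e \<in> E \<and> f \<in> E \<and> e \<inter> f = {}}"

definition crossed :: "(nat \<Rightarrow> 'v set set) \<Rightarrow> bool list \<Rightarrow> 'v set \<Rightarrow> bool" where
  "crossed \<sigma> y e \<longleftrightarrow> (\<exists>j < length y. y ! j \<and> e \<in> \<sigma> j)"

definition saturated :: "'v set set \<Rightarrow> (nat \<Rightarrow> 'v set set) \<Rightarrow> bool list \<Rightarrow> 'v set \<Rightarrow> bool" where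
  "saturated E \<sigma> y e \<longleftrightarrow>
     crossed \<sigma> y e \<or>
     (\<forall>j < card (indep_pairs E). e \<in> \<sigma> j \<longrightarrow> j < length y) \<or>
     (\<forall>f. {e, f} \<in> indep_pairs E \<longrightarrow> crossed \<sigma> y f)"

definition sat_edges :: "'v set set \<Rightarrow> (nat \<Rightarrow> 'v set set) \<Rightarrow> bool list \<Rightarrow> 'v set set" where
  "sat_edges E \<sigma> y = {e \<in> E. saturated E \<sigma> y e}"

definition sat_vertices :: "'v set set \<Rightarrow> (nat \<Rightarrow> 'v set set) \<Rightarrow> bool list \<Rightarrow> 'v set" where
  "sat_vertices E \<sigma> y = \<Union> (sat_edges E \<sigma> y)"

text \<open>Replacement operation: for each j < length y with y[j] = 1, remove the two
edges of sigma(j) and add a new dummy vertex (Inr j) adjacent to their four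
end-vertices.  Original vertices are tagged Inl.\<close>

definition repl_vertices :: "'v set \<Rightarrow> (nat \<Rightarrow> 'v set set) \<Rightarrow> bool list \<Rightarrow> ('v + nat) set" where
  "repl_vertices V \<sigma> y = Inl ` V \<union> {Inr j | j. j < length y \<and> y ! j}"

definition repl_edges :: "'v set set \<Rightarrow> (nat \<Rightarrow> 'v set set) \<Rightarrow> bool list \<Rightarrow> ('v + nat) set set" where
  "repl_edges E \<sigma> y =
     {Inl ` e | e. e \<in> E \<and> \<not> crossed \<sigma> y e} \<union>
     {{Inr j, Inl u} | j u. j < length y \<and> y ! j \<and> u \<in> \<Union> (\<sigma> j)}"

definition G_star_vertices :: "'v set set \<Rightarrow> (nat \<Rightarrow> 'v set set) \<Rightarrow> bool list \<Rightarrow> ('v + nat) set" where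
  "G_star_vertices E \<sigma> y = repl_vertices (sat_vertices E \<sigma> y) \<sigma> y"

definition G_star_edges :: "'v set set \<Rightarrow> (nat \<Rightarrow> 'v set set) \<Rightarrow> bool list \<Rightarrow> ('v + nat) set set" where
  "G_star_edges E \<sigma> y = repl_edges (sat_edges E \<sigma> y) \<sigma> y"

definition true_solution :: "'v set \<Rightarrow> 'v set set \<Rightarrow> (nat \<Rightarrow> 'v set set) \<Rightarrow> bool list \<Rightarrow> bool" where
  "true_solution V E \<sigma> y \<longleftrightarrow>
     length y = card (indep_pairs E) \<and>
     (\<forall>e\<in>E. card {i. i < length y \<and> y ! i \<and> e \<in> \<sigma> i} \<le> 1) \<and>
     planar (repl_vertices V \<sigma> y) (repl_edges E \<sigma> y)"

end

theory Submission
  imports Defs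
begin

lemma planar_mono:
  fixes V :: "'a set"
  assumes "planar V E" "V' \<subseteq> V" "E' \<subseteq> E"
  shows "planar V' E'"
  using assms(1) unfolding planar_def
proof (elim exE conjE)
  fix pos :: "'a \<Rightarrow> complex" and c :: "'a set \<Rightarrow> real \<Rightarrow> complex"
  assume h1: "inj_on pos V" and
    h2: "\<forall>e\<in>E. arc (c e) \<and>
           (\<exists>u v. e = {u, v} \<and> u \<noteq> v \<and> pathstart (c e) = pos u \<and> pathfinish (c e) = pos v) \<and>
           path_image (c e) \<inter> pos ` V \<subseteq> pos ` e" and
    h3: "\<forall>e\<in>E. \<forall>f\<in>E. e \<noteq> f \<longrightarrow> path_image (c e) \<inter> path_image (c f) \<subseteq> pos ` (e \<inter> f)"
  have a: "inj_on pos V'" using h1 assms(2) by (rule inj_on_subset)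
  have b: "\<forall>e\<in>E'. arc (c e) \<and>
           (\<exists>u v. e = {u, v} \<and> u \<noteq> v \<and> pathstart (c e) = pos u \<and> pathfinish (c e) = pos v) \<and>
           path_image (c e) \<inter> pos ` V' \<subseteq> pos ` e"
  proof
    fix e assume "e \<in> E'"
    then have "e \<in> E" using assms(3) by (rule subsetD[rotated])
    then have x: "arc (c e) \<and>
           (\<exists>u v. e = {u, v} \<and> u \<noteq> v \<and> pathstart (c e) = pos u \<and> pathfinish (c e) = pos v) \<and>
           path_image (c e) \<inter> pos ` V \<subseteq> pos ` e" using h2 by (rule bspec[rotated])
    have "path_image (c e) \<inter> pos ` V' \<subseteq> path_image (c e) \<inter> pos ` V"
      using assms(2) by (intro Int_mono image_mono subset_refl)
    then show "arc (c e) \<and>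
           (\<exists>u v. e = {u, v} \<and> u \<noteq> v \<and> pathstart (c e) = pos u \<and> pathfinish (c e) = pos v) \<and>
           path_image (c e) \<inter> pos ` V' \<subseteq> pos ` e"
    proof (intro conjI)
      show "arc (c e)" using x by (rule conjunct1)
      show "\<exists>u v. e = {u, v} \<and> u \<noteq> v \<and> pathstart (c e) = pos u \<and> pathfinish (c e) = pos v"
        using x by (rule conjunct1[OF conjunct2])
      show "path_image (c e) \<inter> pos ` V' \<subseteq> pos ` e"
        using \<open>path_image (c e) \<inter> pos ` V' \<subseteq> path_image (c e) \<inter> pos ` V\<close>
          conjunct2[OF conjunct2[OF x]] by (rule subset_trans)
    qed
  qed
  have d: "\<forall>e\<in>E'. \<forall>f\<in>E'. e \<noteq> f \<longrightarrow> path_image (c e) \<inter> path_image (c f) \<subseteq> pos ` (e \<inter> f)"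
  proof (intro ballI impI)
    fix e f assume "e \<in> E'" "f \<in> E'" "e \<noteq> f"
    have "e \<in> E" by (rule subsetD[OF assms(3) \<open>e \<in> E'\<close>])
    have "f \<in> E" by (rule subsetD[OF assms(3) \<open>f \<in> E'\<close>])
    show "path_image (c e) \<inter> path_image (c f) \<subseteq> pos ` (e \<inter> f)"
      using h3 \<open>e \<in> E\<close> \<open>f \<in> E\<close> \<open>e \<noteq> f\<close> by simp
  qed
  show "\<exists>(pos::'a \<Rightarrow> complex) (c::'a set \<Rightarrow> real \<Rightarrow> complex). inj_on pos V' \<and>
        (\<forall>e\<in>E'. arc (c e) \<and>
           (\<exists>u v. e = {u, v} \<and> u \<noteq> v \<and> pathstart (c e) = pos u \<and> pathfinish (c e) = pos v) \<and>
           path_image (c e) \<inter> pos ` V' \<subseteq> pos ` e) \<and>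
        (\<forall>e\<in>E'. \<forall>f\<in>E'. e \<noteq> f \<longrightarrow> path_image (c e) \<inter> path_image (c f) \<subseteq> pos ` (e \<inter> f))"
    by (rule exI, rule exI, rule conjI[OF a conjI[OF b d]])
qed

theorem lemma3:
  fixes V :: "'v set" and E :: "'v set set" and \<sigma> :: "nat \<Rightarrow> 'v set set"
    and y_nu y_mu :: "bool list"
  assumes "simple_graph V E"
    and "bij_betw \<sigma> {..<card (indep_pairs E)} (indep_pairs E)"
    and "length y_nu \<le> card (indep_pairs E)"
    and "length y_mu = card (indep_pairs E)"
    and "take (length y_nu) y_mu = y_nu"
    and "true_solution V E \<sigma> y_mu"
  shows "planar (G_star_vertices E \<sigma> y_nu) (G_star_edges E \<sigma> y_nu)"
proof -
  have nth: "\<And>j. j < length y_nu \<Longrightarrow> y_mu ! j = y_nu ! j"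
    using assms(5) by (metis nth_take)
  have EV: "e \<subseteq> V" if "e \<in> E" for e
  proof -
    have "\<forall>e\<in>E. \<exists>u v. e = {u, v} \<and> u \<noteq> v \<and> u \<in> V \<and> v \<in> V"
      using assms(1) unfolding simple_graph_def by (rule conjunct2)
    then have "\<exists>u v. e = {u, v} \<and> u \<noteq> v \<and> u \<in> V \<and> v \<in> V" using that by (rule bspec)
    then obtain u v where "e = {u, v}" "u \<in> V" "v \<in> V" by (elim exE conjE)
    then show ?thesis by simp
  qed
  have ts: "length y_mu = card (indep_pairs E) \<and>
     (\<forall>e\<in>E. card {i. i < length y_mu \<and> y_mu ! i \<and> e \<in> \<sigma> i} \<le> 1) \<and>
     planar (repl_vertices V \<sigma> y_mu) (repl_edges E \<sigma> y_mu)"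
    using assms(6) unfolding true_solution_def .
  have pl: "planar (repl_vertices V \<sigma> y_mu) (repl_edges E \<sigma> y_mu)"
    using ts by (rule conjunct2[OF conjunct2])
  have uniq: "card {i. i < length y_mu \<and> y_mu ! i \<and> e \<in> \<sigma> i} \<le> 1" if "e \<in> E" for e
    using conjunct1[OF conjunct2[OF ts]] that by (rule bspec)
  have sig: "\<And>j. j < card (indep_pairs E) \<Longrightarrow> \<sigma> j \<in> indep_pairs E"
    using assms(2) unfolding bij_betw_def by blast
  have V: "G_star_vertices E \<sigma> y_nu \<subseteq> repl_vertices V \<sigma> y_mu"
    unfolding G_star_vertices_def repl_vertices_def sat_vertices_def sat_edges_def
    using EV nth assms(3,4) by fastforce
  have notcr: "\<not> crossed \<sigma> y_mu e"
    if e: "e \<in> E" "saturated E \<sigma> y_nu e" "\<not> crossed \<sigma> y_nu e" for e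
  proof
    assume "crossed \<sigma> y_mu e"
    then obtain j where j: "j < length y_mu" "y_mu ! j" "e \<in> \<sigma> j"
      unfolding crossed_def by blast
    have jn: "\<not> j < length y_nu"
      using j nth e(3) unfolding crossed_def by auto
    from e(2) e(3) have allf: "(\<forall>f. {e, f} \<in> indep_pairs E \<longrightarrow> crossed \<sigma> y_nu f)"
      unfolding saturated_def using j jn assms(4) by auto
    have sigj: "\<sigma> j \<in> indep_pairs E" using sig j assms(4) by auto
    then have "\<exists>a b. \<sigma> j = {a,b} \<and> a \<in> E \<and> b \<in> E \<and> a \<inter> b = {}"
      unfolding indep_pairs_def by (rule CollectD)
    then obtain a b where ab: "\<sigma> j = {a,b}" "a \<in> E" "b \<in> E" "a \<inter> b = {}"
      by (elim exE conjE)
    define f where "f = (if e = a then b else a)"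
    have sj: "\<sigma> j = {e, f}" using ab j(3) f_def by auto
    have fE: "f \<in> E" using ab f_def by auto
    have "crossed \<sigma> y_nu f" using allf sigj unfolding sj by blast
    then obtain j' where j': "j' < length y_nu" "y_nu ! j'" "f \<in> \<sigma> j'"
      unfolding crossed_def by blast
    have jin: "j \<in> {i. i < length y_mu \<and> y_mu ! i \<and> f \<in> \<sigma> i}" using j sj by auto
    have jin': "j' \<in> {i. i < length y_mu \<and> y_mu ! i \<and> f \<in> \<sigma> i}"
      using j' nth assms(3,4) by auto
    have fin: "finite {i. i < length y_mu \<and> y_mu ! i \<and> f \<in> \<sigma> i}" by auto
    have "card {i. i < length y_mu \<and> y_mu ! i \<and> f \<in> \<sigma> i} \<le> Suc 0"
      using uniq[OF fE] by simp
    then have "j = j'" using card_le_Suc0_iff_eq[OF fin] jin jin' by blast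
    then show False using jn j' by simp
  qed
  have E: "G_star_edges E \<sigma> y_nu \<subseteq> repl_edges E \<sigma> y_mu"
  proof
    fix x assume "x \<in> G_star_edges E \<sigma> y_nu"
    then consider (a) e where "x = Inl ` e" "e \<in> E" "saturated E \<sigma> y_nu e" "\<not> crossed \<sigma> y_nu e"
      | (b) j u where "x = {Inr j, Inl u}" "j < length y_nu" "y_nu ! j" "u \<in> \<Union> (\<sigma> j)"
      unfolding G_star_edges_def repl_edges_def sat_edges_def by blast
    then show "x \<in> repl_edges E \<sigma> y_mu"
    proof cases
      case a then show ?thesis using notcr unfolding repl_edges_def by blast
    next
      case b
      have "j < length y_mu" using b(2) assms(3,4) by simp
      moreover have "y_mu ! j" using b(3) nth[OF b(2)] by simp
      ultimately have "x \<in> {{Inr j, Inl u} | j u. j < length y_mu \<and> y_mu ! j \<and> u \<in> \<Union> (\<sigma> j)}"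
        using b(1,4) by blast
      then show ?thesis unfolding repl_edges_def by (rule UnI2)
    qed
  qed
  show ?thesis using planar_mono[OF pl V E] .
qed

end
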